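(* For all integers $m,n\geq 5$ with $m\neq 6$, $m\neq 8$ and $n\neq 7$, $\chi_i(C_m\Box C_n)\leq 6$.
   Context: For a graph $G$, an incidence is a pair $(v,e)$ with $v\in V(G)$, $e\in E(G)$ and $v$ incident with $e$. Two incidences $(v,e)$ and $(w,f)$ are adjacent if $v=w$, or $e=f$, or the edge $vw$ equals $e$ or $f$. An incidence $k$-coloring of $G$ is a map from the set of incidences of $G$ to a set of $k$ colors such that adjacent incidences receive distinct colors; the incidence chromatic number $\chi_i(G)$ is the least such $k$. $C_n$ denotes the cycle on $n$ vertices and $\Box$ the Cartesian product of graphs: $G\Box H$ has vertex set $V(G)\times V(H)$, with $(u_1,v_1)$ adjacent to $(u_2,v_2)$ iff either $u_1=u_2$ and $v_1v_2\in E(H)$, or $v_1=v_2$ and $u_1u_2\in E(G)$. *)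

theory Defs
  imports Main
begin

text \<open>A simple graph is a pair (V, E) where E is a set of 2-element subsets of V.\<close>
type_synonym 'a graph = "'a set \<times> 'a set set"

definition verts :: "'a graph \<Rightarrow> 'a set" where "verts G = fst G"
definition edges :: "'a graph \<Rightarrow> 'a set set" where "edges G = snd G"

definition incidences :: "'a graph \<Rightarrow> ('a \<times> 'a set) set" where
  "incidences G = {(v, e). e \<in> edges G \<and> v \<in> e \<and> v \<in> verts G}"

definition inc_adjacent :: "('a \<times> 'a set) \<Rightarrow> ('a \<times> 'a set) \<Rightarrow> bool" where
  "inc_adjacent i j \<longleftrightarrow> i \<noteq> j \<and>
     (fst i = fst j \<or> snd i = snd j \<or> {fst i, fst j} = snd i \<or> {fst i, fst j} = snd j)"

definition incidence_coloring :: "'a graph \<Rightarrow> nat \<Rightarrow> (('a \<times> 'a set) \<Rightarrow> nat) \<Rightarrow> bool" where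
  "incidence_coloring G k c \<longleftrightarrow>
     (\<forall>i\<in>incidences G. c i < k) \<and>
     (\<forall>i\<in>incidences G. \<forall>j\<in>incidences G. inc_adjacent i j \<longrightarrow> c i \<noteq> c j)"

definition incidence_chromatic_number :: "'a graph \<Rightarrow> nat" where
  "incidence_chromatic_number G = (LEAST k. \<exists>c. incidence_coloring G k c)"

definition cycle_graph :: "nat \<Rightarrow> nat graph" where
  "cycle_graph n = ({0..<n}, {{i, (i + 1) mod n} | i. i < n})"

definition cart_prod :: "'a graph \<Rightarrow> 'b graph \<Rightarrow> ('a \<times> 'b) graph" where
  "cart_prod G H = (verts G \<times> verts H,
     {{(u, v1), (u, v2)} | u v1 v2. u \<in> verts G \<and> {v1, v2} \<in> edges H} \<union>
     {{(u1, v), (u2, v)} | u1 u2 v. v \<in> verts H \<and> {u1, u2} \<in> edges G})"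

end

theory Submission
  imports Defs
begin


definition Ftab :: "nat list list list" where "Ftab = [[[2, 2, 3, 3, 4, 4, 4, 4, 2, 2, 0, 4], [5, 5, 5, 4, 3, 3, 5, 3, 3, 3, 1, 2], [1, 3, 0, 5, 5, 2, 1, 5, 1, 4, 0, 5], [5, 2, 2, 1, 4, 4, 5, 4, 4, 1, 3, 4], [3, 1, 0, 0, 5, 1, 2, 0, 1, 3, 4, 1], [0, 5, 5, 4, 2, 0, 4, 3, 4, 5, 1, 2], [1, 4, 0, 0, 5, 5, 3, 5, 5, 3, 2, 5], [2, 5, 3, 3, 4, 4, 2, 4, 4, 1, 5, 4], [1, 1, 4, 0, 5, 5, 3, 0, 5, 3, 2, 1], [4, 5, 5, 1, 2, 2, 4, 2, 4, 5, 1, 0], [3, 4, 0, 0, 5, 1, 3, 0, 1, 3, 4, 5], [0, 2, 2, 2, 4, 4, 1, 4, 5, 2, 5, 4], [1, 1, 4, 5, 2, 1, 2, 0, 1, 1, 4, 1]], [[0, 5, 2, 1, 3, 0, 1, 3, 4, 0, 3, 0], [3, 4, 4, 5, 5, 5, 3, 5, 5, 1, 4, 1], [2, 2, 3, 0, 4, 4, 0, 1, 4, 2, 5, 4], [0, 5, 1, 4, 1, 0, 4, 3, 0, 5, 1, 3], [1, 3, 3, 5, 2, 2, 0, 2, 2, 4, 5, 2], [5, 2, 2, 2, 4, 4, 1, 4, 5, 1, 2, 4], [3, 1, 1, 3, 1, 1, 5, 0, 1, 4, 4, 1], [0, 3, 2, 4, 3, 0, 4, 2, 2, 0, 1, 2],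 [3, 4, 0, 5, 2, 1, 5, 5, 1, 4, 0, 5], [2, 2, 3, 3, 3, 0, 2, 4, 2, 0, 3, 4], [1, 1, 4, 2, 4, 5, 5, 5, 5, 4, 2, 1], [4, 3, 5, 4, 3, 0, 4, 3, 4, 5, 3, 0], [3, 4, 0, 0, 5, 2, 3, 2, 2, 3, 1, 2]], [[4, 0, 5, 2, 1, 3, 0, 1, 3, 4, 5, 3], [1, 3, 0, 1, 2, 0, 1, 2, 0, 5, 3, 0], [4, 1, 2, 3, 0, 5, 2, 0, 5, 1, 2, 0], [4, 0, 5, 2, 3, 1, 2, 1, 3, 0, 2, 1], [2, 4, 1, 3, 0, 5, 3, 5, 0, 2, 0, 5], [4, 0, 3, 5, 3, 2, 0, 2, 3, 0, 5, 3], [5, 2, 4, 2, 0, 4, 2, 4, 0, 1, 0, 4], [4, 0, 5, 2, 1, 3, 0, 1, 3, 2, 3, 1], [5, 3, 1, 4, 0, 2, 4, 2, 0, 5, 4, 2], [0, 4, 2, 5, 1, 3, 0, 1, 3, 2, 5, 3], [5, 2, 1, 3, 0, 4, 2, 4, 0, 1, 0, 4], [5, 0, 1, 5, 1, 3, 0, 1, 3, 4, 2, 3], [2, 3, 1, 4, 0, 5, 4, 5, 0, 5, 0, 5]], [[5, 3, 1, 4, 0, 2, 5, 2, 0, 5, 1, 2], [4, 0, 1, 2, 0, 1, 2, 0, 1, 4, 2, 5], [3, 0, 4, 1, 2, 1, 3, 4, 2, 0, 3, 1], [2, 1, 4, 3, 0, 5, 3, 0, 5, 2, 4, 0], [4,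 0, 5, 4, 1, 3, 4, 1, 3, 5, 1, 3], [1, 3, 4, 1, 0, 5, 3, 5, 0, 2, 3, 0], [2, 0, 3, 5, 4, 3, 0, 1, 3, 2, 5, 3], [5, 1, 4, 1, 0, 2, 1, 3, 0, 5, 4, 0], [4, 0, 5, 2, 1, 3, 0, 1, 3, 2, 1, 3], [5, 3, 1, 4, 0, 4, 1, 3, 0, 1, 4, 2], [2, 0, 3, 5, 1, 3, 0, 1, 3, 2, 5, 3], [2, 1, 4, 3, 0, 5, 2, 5, 0, 1, 0, 1], [4, 0, 5, 3, 1, 3, 0, 1, 3, 4, 2, 3]]]"

definition F :: "nat \<Rightarrow> nat \<Rightarrow> nat \<Rightarrow> nat" where "F d a b = Ftab ! d ! a ! b"

definition Rr :: "nat \<Rightarrow> nat \<Rightarrow> bool" where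
 "Rr a a' \<longleftrightarrow> (a < 12 \<and> a' = a+1) \<or> (a' = 0 \<and> (a=4 \<or> a=6 \<or> a=8 \<or> a=10 \<or> a=12))"
definition Cr :: "nat \<Rightarrow> nat \<Rightarrow> bool" where
 "Cr b b' \<longleftrightarrow> (b < 11 \<and> b' = b+1) \<or> (b' = 0 \<and> (b=4 \<or> b=5 \<or> b=7 \<or> b=8 \<or> b=11))"

lemma chk_range: "list_all (\<lambda>d. list_all (\<lambda>a. list_all (\<lambda>b. F d a b < 6) [0..<12]) [0..<13]) [0..<4]"
  unfolding F_def Ftab_def by code_simp

lemma chk_A: "list_all (\<lambda>a. list_all (\<lambda>b. distinct [F 0 a b, F 1 a b, F 2 a b, F 3 a b]) [0..<12]) [0..<13]"
  unfolding F_def Ftab_def by code_simp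

lemma chk_E: "list_all (\<lambda>a. list_all (\<lambda>a'. list_all (\<lambda>b. list_all (\<lambda>d. Rr a a' \<longrightarrow> F 0 a b \<noteq> F d a' b) [0..<4]) [0..<12]) [0..<13]) [0..<13]"
  unfolding F_def Ftab_def Rr_def by code_simp

lemma chk_W: "list_all (\<lambda>a. list_all (\<lambda>a'. list_all (\<lambda>b. list_all (\<lambda>d. Rr a a' \<longrightarrow> F 1 a' b \<noteq> F d a b) [0..<4]) [0..<12]) [0..<13]) [0..<13]"
  unfolding F_def Ftab_def Rr_def by code_simp

lemma chk_N: "list_all (\<lambda>b. list_all (\<lambda>b'. list_all (\<lambda>a. list_all (\<lambda>d. Cr b b' \<longrightarrow> F 2 a b \<noteq> F d a b') [0..<4]) [0..<13]) [0..<12]) [0..<12]"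
  unfolding F_def Ftab_def Cr_def by code_simp

lemma chk_S: "list_all (\<lambda>b. list_all (\<lambda>b'. list_all (\<lambda>a. list_all (\<lambda>d. Cr b b' \<longrightarrow> F 3 a b' \<noteq> F d a b) [0..<4]) [0..<13]) [0..<12]) [0..<12]"
  unfolding F_def Ftab_def Cr_def by code_simp



definition nxt :: "nat \<Rightarrow> nat \<Rightarrow> nat" where "nxt m i = (if i+1 = m then 0 else i+1)"
definition prv :: "nat \<Rightarrow> nat \<Rightarrow> nat" where "prv m i = (if i = 0 then m-1 else i-1)"

definition nb :: "nat \<Rightarrow> nat \<Rightarrow> nat \<Rightarrow> nat\<times>nat \<Rightarrow> nat\<times>nat" where
 "nb m n d v = (if d=0 then (nxt m (fst v), snd v) else if d=1 then (prv m (fst v), snd v)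
    else if d=2 then (fst v, nxt n (snd v)) else (fst v, prv n (snd v)))"

definition dir :: "nat \<Rightarrow> nat \<Rightarrow> nat\<times>nat \<Rightarrow> (nat\<times>nat) set \<Rightarrow> nat" where
 "dir m n v e = (if nb m n 0 v \<in> e then 0 else if nb m n 1 v \<in> e then 1
    else if nb m n 2 v \<in> e then 2 else 3)"

definition col :: "nat \<Rightarrow> nat \<Rightarrow> (nat \<Rightarrow> nat) \<Rightarrow> (nat \<Rightarrow> nat) \<Rightarrow> (nat\<times>nat) \<times> (nat\<times>nat) set \<Rightarrow> nat" where
 "col m n \<sigma> \<tau> x = F (dir m n (fst x) (snd x)) (\<sigma> (fst (fst x))) (\<tau> (snd (fst x)))"

lemma nxt_lt: "i < m \<Longrightarrow> nxt m i < m" by (auto simp: nxt_def)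
lemma prv_lt: "i < m \<Longrightarrow> prv m i < m" by (auto simp: prv_def)
lemma nxt_ne: "i < m \<Longrightarrow> 2 \<le> m \<Longrightarrow> nxt m i \<noteq> i" by (auto simp: nxt_def)
lemma prv_ne: "i < m \<Longrightarrow> 2 \<le> m \<Longrightarrow> prv m i \<noteq> i" by (auto simp: prv_def)
lemma nxt_prv_ne: "i < m \<Longrightarrow> 3 \<le> m \<Longrightarrow> nxt m i \<noteq> prv m i" by (auto simp: nxt_def prv_def)
lemma nxt_prv: "i < m \<Longrightarrow> nxt m (prv m i) = i" by (auto simp: nxt_def prv_def)
lemma prv_nxt: "i < m \<Longrightarrow> prv m (nxt m i) = i" by (auto simp: nxt_def prv_def)
lemma mod_nxt: "i < m \<Longrightarrow> (i+1) mod m = nxt m i" by (auto simp: nxt_def)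
lemma mod_nxt': "i < m \<Longrightarrow> Suc i mod m = nxt m i" by (auto simp: nxt_def)

lemma nb_range: "fst v < m \<Longrightarrow> snd v < n \<Longrightarrow> fst (nb m n d v) < m \<and> snd (nb m n d v) < n"
  by (auto simp: nb_def nxt_lt prv_lt)

lemma nb_ne: "fst v < m \<Longrightarrow> snd v < n \<Longrightarrow> 3 \<le> m \<Longrightarrow> 3 \<le> n \<Longrightarrow> d < 4 \<Longrightarrow> nb m n d v \<noteq> v"
  by (cases v) (auto simp: nb_def nxt_ne prv_ne)

lemma nb_inj: assumes "fst v < m" "snd v < n" "3 \<le> m" "3 \<le> n" "d < 4" "d' < 4"
   "nb m n d v = nb m n d' v" shows "d = d'"
proof -
  obtain i j where v: "v = (i,j)" by (cases v)
  have f: "nxt m i \<noteq> i" "prv m i \<noteq> i" "nxt m i \<noteq> prv m i"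
       "nxt n j \<noteq> j" "prv n j \<noteq> j" "nxt n j \<noteq> prv n j"
    using nxt_ne prv_ne nxt_prv_ne assms v by auto
  have "d \<in> {0,1,2,3}" "d' \<in> {0,1,2,3}" using assms by auto
  then show ?thesis using assms(7) f v by (auto simp: nb_def)
qed

lemma dir_nb: assumes "fst v < m" "snd v < n" "3 \<le> m" "3 \<le> n" "d < 4"
  shows "dir m n v {v, nb m n d v} = d"
proof -
  have ne: "\<And>d'. d' < 4 \<Longrightarrow> nb m n d' v \<noteq> v" using nb_ne assms by blast
  have inj: "\<And>d'. d' < 4 \<Longrightarrow> nb m n d' v = nb m n d v \<longleftrightarrow> d' = d" using nb_inj assms by blast
  have "d = 0 \<or> d = 1 \<or> d = 2 \<or> d = 3" using assms by auto
  then show ?thesis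
    unfolding dir_def using ne[of 0] ne[of 1] ne[of 2] ne[of 3] inj[of 0] inj[of 1] inj[of 2] inj[of 3]
    by auto
qed

lemma inc_char:
  assumes "x \<in> incidences (cart_prod (cycle_graph m) (cycle_graph n))"
  shows "fst (fst x) < m \<and> snd (fst x) < n \<and> (\<exists>d<4. snd x = {fst x, nb m n d (fst x)})"
proof -
  obtain v e where x: "x = (v,e)" by (cases x)
  have ev: "e \<in> edges (cart_prod (cycle_graph m) (cycle_graph n))" "v \<in> e"
     "v \<in> verts (cart_prod (cycle_graph m) (cycle_graph n))"
    using assms x by (auto simp: incidences_def)
  have vr: "fst v < m" "snd v < n" using ev(3) by (auto simp: verts_def cart_prod_def cycle_graph_def)
  have "\<exists>d<4. e = {v, nb m n d v}"
  proof -
    from ev(1) consider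
      (V) u v1 v2 where "e = {(u,v1),(u,v2)}" "u < m" "{v1,v2} \<in> {{i, (i + 1) mod n} | i. i < n}"
    | (H) u1 u2 w where "e = {(u1,w),(u2,w)}" "w < n" "{u1,u2} \<in> {{i, (i + 1) mod m} | i. i < m}"
      by (simp add: edges_def verts_def cart_prod_def cycle_graph_def) blast
    then show ?thesis
    proof cases
      case V
      then obtain k where k: "k < n" "{v1,v2} = {k, nxt n k}" using V(3) by (auto simp: mod_nxt')
      then have e: "e = {(u,k),(u,nxt n k)}" using V(1) by (auto simp: doubleton_eq_iff)
      from ev(2) e have "v = (u,k) \<or> v = (u, nxt n k)" by auto
      then show ?thesis
      proof
        assume "v = (u,k)"
        then have "e = {v, nb m n 2 v}" using e by (simp add: nb_def)
        then show ?thesis by (intro exI[of _ 2]) simp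
      next
        assume "v = (u, nxt n k)"
        then have "e = {v, nb m n 3 v}" using e k(1) by (auto simp: nb_def prv_nxt)
        then show ?thesis by (intro exI[of _ 3]) simp
      qed
    next
      case H
      then obtain k where k: "k < m" "{u1,u2} = {k, nxt m k}" using H(3) by (auto simp: mod_nxt')
      then have e: "e = {(k,w),(nxt m k,w)}" using H(1) by (auto simp: doubleton_eq_iff)
      from ev(2) e have "v = (k,w) \<or> v = (nxt m k, w)" by auto
      then show ?thesis
      proof
        assume "v = (k,w)"
        then have "e = {v, nb m n 0 v}" using e by (simp add: nb_def)
        then show ?thesis by (intro exI[of _ 0]) simp
      next
        assume "v = (nxt m k, w)"
        then have "e = {v, nb m n 1 v}" using e k(1) by (auto simp: nb_def prv_nxt)
        then show ?thesis by (intro exI[of _ 1]) simp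
      qed
    qed
  qed
  then show ?thesis using x vr by auto
qed



lemma range_F: "d < 4 \<Longrightarrow> a < 13 \<Longrightarrow> b < 12 \<Longrightarrow> F d a b < 6"
  using chk_range by (simp add: list_all_iff)

lemma A_F: "a < 13 \<Longrightarrow> b < 12 \<Longrightarrow> d < 4 \<Longrightarrow> d' < 4 \<Longrightarrow> d \<noteq> d' \<Longrightarrow> F d a b \<noteq> F d' a b"
proof -
  assume as: "a < 13" "b < 12" "d < 4" "d' < 4" "d \<noteq> d'"
  have "distinct [F 0 a b, F 1 a b, F 2 a b, F 3 a b]" using chk_A as by (simp add: list_all_iff)
  moreover have "d \<in> {0,1,2,3}" "d' \<in> {0,1,2,3}" using as by auto
  ultimately show ?thesis using as(5) by auto
qed

lemma Rr_lt: "Rr a a' \<Longrightarrow> a < 13 \<and> a' < 13" by (auto simp: Rr_def)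
lemma Cr_lt: "Cr b b' \<Longrightarrow> b < 12 \<and> b' < 12" by (auto simp: Cr_def)

lemma E_F: "Rr a a' \<Longrightarrow> b < 12 \<Longrightarrow> d < 4 \<Longrightarrow> F 0 a b \<noteq> F d a' b"
  using chk_E Rr_lt[of a a'] by (simp add: list_all_iff)
lemma W_F: "Rr a a' \<Longrightarrow> b < 12 \<Longrightarrow> d < 4 \<Longrightarrow> F 1 a' b \<noteq> F d a b"
  using chk_W Rr_lt[of a a'] by (simp add: list_all_iff)
lemma N_F: "Cr b b' \<Longrightarrow> a < 13 \<Longrightarrow> d < 4 \<Longrightarrow> F 2 a b \<noteq> F d a b'"
  using chk_N Cr_lt[of b b'] by (simp add: list_all_iff)
lemma S_F: "Cr b b' \<Longrightarrow> a < 13 \<Longrightarrow> d < 4 \<Longrightarrow> F 3 a b' \<noteq> F d a b"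
  using chk_S Cr_lt[of b b'] by (simp add: list_all_iff)

locale tor_setup =
  fixes m n :: nat and \<sigma> \<tau> :: "nat \<Rightarrow> nat"
  assumes m3: "3 \<le> m" and n3: "3 \<le> n"
  and sR: "\<And>i. i < m \<Longrightarrow> \<sigma> i < 13" and sC: "\<And>j. j < n \<Longrightarrow> \<tau> j < 12"
  and tR: "\<And>i. i < m \<Longrightarrow> Rr (\<sigma> i) (\<sigma> (nxt m i))"
  and tC: "\<And>j. j < n \<Longrightarrow> Cr (\<tau> j) (\<tau> (nxt n j))"
begin

lemma col_eq: "fst v < m \<Longrightarrow> snd v < n \<Longrightarrow> d < 4 \<Longrightarrow>
   col m n \<sigma> \<tau> (v, {v, nb m n d v}) = F d (\<sigma> (fst v)) (\<tau> (snd v))"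
  by (simp add: col_def dir_nb m3 n3)

lemma keyA: "fst v < m \<Longrightarrow> snd v < n \<Longrightarrow> d < 4 \<Longrightarrow> d' < 4 \<Longrightarrow> d \<noteq> d' \<Longrightarrow>
   col m n \<sigma> \<tau> (v, {v, nb m n d v}) \<noteq> col m n \<sigma> \<tau> (v, {v, nb m n d' v})"
  by (simp add: col_eq A_F sR sC)

lemma keyB: assumes v: "fst v < m" "snd v < n" and d: "d < 4" "d' < 4"
  shows "col m n \<sigma> \<tau> (v, {v, nb m n d v}) \<noteq> col m n \<sigma> \<tau> (nb m n d v, {nb m n d v, nb m n d' (nb m n d v)})"
proof -
  obtain i j where vv: "v = (i,j)" by (cases v)
  have w: "fst (nb m n d v) < m" "snd (nb m n d v) < n" using nb_range v by blast+
  have e1: "col m n \<sigma> \<tau> (v, {v, nb m n d v}) = F d (\<sigma> i) (\<tau> j)" using col_eq v d vv by simp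
  have e2: "col m n \<sigma> \<tau> (nb m n d v, {nb m n d v, nb m n d' (nb m n d v)})
     = F d' (\<sigma> (fst (nb m n d v))) (\<tau> (snd (nb m n d v)))" using col_eq[OF w d(2)] by simp
  have ij: "i < m" "j < n" using v vv by auto
  have "F d (\<sigma> i) (\<tau> j) \<noteq> F d' (\<sigma> (fst (nb m n d v))) (\<tau> (snd (nb m n d v)))"
  proof -
    have "d = 0 \<or> d = 1 \<or> d = 2 \<or> d = 3" using d by auto
    moreover have "d = 0 \<Longrightarrow> ?thesis"
      using E_F[OF tR[OF ij(1)] sC[OF ij(2)] d(2)] vv by (simp add: nb_def)
    moreover have "d = 1 \<Longrightarrow> ?thesis"
    proof -
      have "Rr (\<sigma> (prv m i)) (\<sigma> i)" using tR[of "prv m i"] ij prv_lt nxt_prv by auto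
      from W_F[OF this sC[OF ij(2)] d(2)] show "d = 1 \<Longrightarrow> ?thesis" using vv by (simp add: nb_def)
    qed
    moreover have "d = 2 \<Longrightarrow> ?thesis"
      using N_F[OF tC[OF ij(2)] sR[OF ij(1)] d(2)] vv by (simp add: nb_def)
    moreover have "d = 3 \<Longrightarrow> ?thesis"
    proof -
      have "Cr (\<tau> (prv n j)) (\<tau> j)" using tC[of "prv n j"] ij prv_lt nxt_prv by auto
      from S_F[OF this sR[OF ij(1)] d(2)] show "d = 3 \<Longrightarrow> ?thesis" using vv by (simp add: nb_def)
    qed
    ultimately show ?thesis by blast
  qed
  then show ?thesis using e1 e2 by simp
qed

lemma coloring: "incidence_coloring (cart_prod (cycle_graph m) (cycle_graph n)) 6 (col m n \<sigma> \<tau>)"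
  unfolding incidence_coloring_def
proof (intro conjI ballI impI)
  fix x assume "x \<in> incidences (cart_prod (cycle_graph m) (cycle_graph n))"
  then obtain d where "fst (fst x) < m" "snd (fst x) < n" "d < 4" "snd x = {fst x, nb m n d (fst x)}"
    using inc_char by blast
  then show "col m n \<sigma> \<tau> x < 6"
    using col_eq[of "fst x" d] range_F sR sC by (metis prod.collapse)
next
  fix x y assume x: "x \<in> incidences (cart_prod (cycle_graph m) (cycle_graph n))"
    and y: "y \<in> incidences (cart_prod (cycle_graph m) (cycle_graph n))"
    and adj: "inc_adjacent x y"
  obtain v e w f where xy: "x = (v,e)" "y = (w,f)" by (cases x, cases y)
  obtain d where dv: "fst v < m" "snd v < n" "d < 4" "e = {v, nb m n d v}"
    using inc_char[OF x] xy by auto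
  obtain d' where dw: "fst w < m" "snd w < n" "d' < 4" "f = {w, nb m n d' w}"
    using inc_char[OF y] xy by auto
  have ne: "x \<noteq> y" and c: "v = w \<or> e = f \<or> {v,w} = e \<or> {v,w} = f"
    using adj xy by (auto simp: inc_adjacent_def)
  show "col m n \<sigma> \<tau> x \<noteq> col m n \<sigma> \<tau> y"
  proof (cases "v = w")
    case True
    then have "d \<noteq> d'" using ne xy dv dw by auto
    then show ?thesis using keyA[of v d d'] True xy dv dw by simp
  next
    case False
    then have "w = nb m n d v \<or> v = nb m n d' w" using c dv dw by auto
    then show ?thesis
    proof
      assume "w = nb m n d v"
      then show ?thesis using keyB[of v d d'] xy dv dw by simp
    next
      assume "v = nb m n d' w"
      then show ?thesis using keyB[of w d' d] xy dv dw by metis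
    qed
  qed
qed

end



definition rr :: "nat \<Rightarrow> nat" where
  "rr m = (if m mod 5 = 0 then 5 else if m mod 5 = 1 then 11 else if m mod 5 = 2 then 7
           else if m mod 5 = 3 then 13 else 9)"
definition rc :: "nat \<Rightarrow> nat" where
  "rc n = (if n mod 5 = 0 then 5 else if n mod 5 = 1 then 6 else if n mod 5 = 2 then 12
           else if n mod 5 = 3 then 8 else 9)"

definition sg :: "(nat \<Rightarrow> nat) \<Rightarrow> nat \<Rightarrow> nat \<Rightarrow> nat" where
  "sg r m i = (if i < m - r m then i mod 5 else i - (m - r m))"

lemma walk:
  fixes P :: "nat \<Rightarrow> nat \<Rightarrow> bool" and r :: "nat \<Rightarrow> nat"
  assumes r5: "5 \<le> r m" and rm: "r m \<le> m" and rmod: "(m - r m) mod 5 = 0"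
  and step: "\<And>a. a + 2 \<le> r m \<Longrightarrow> P a (a+1)"
  and cyc: "\<And>a. a < 4 \<Longrightarrow> P a (a+1)" and c4: "P 4 0" and bk: "P (r m - 1) 0"
  and i: "i < m"
  shows "P (sg r m i) (sg r m (nxt m i))"
proof -
  define k where "k = m - r m"
  have km: "k + r m = m" using rm k_def by simp
  have k5: "k mod 5 = 0" using rmod k_def by simp
  have s0: "sg r m 0 = 0" by (simp add: sg_def)
  consider (a) "i + 1 < k" | (b) "i + 1 = k" | (c) "k \<le> i" "i + 1 < m" | (d) "i + 1 = m"
    using i by linarith
  then show ?thesis
  proof cases
    case a
    then have n: "nxt m i = i + 1" using km i by (simp add: nxt_def)
    have "i mod 5 < 4 \<or> i mod 5 = 4" by auto
    then show ?thesis
    proof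
      assume "i mod 5 < 4"
      then have "(i+1) mod 5 = i mod 5 + 1" by (simp add: mod_Suc)
      then show ?thesis using a n cyc[of "i mod 5"] \<open>i mod 5 < 4\<close> by (simp add: sg_def k_def)
    next
      assume h: "i mod 5 = 4"
      then have "(i+1) mod 5 = 0" by (simp add: mod_Suc)
      then show ?thesis using a n c4 h by (simp add: sg_def k_def)
    qed
  next
    case b
    then have n: "nxt m i = k" using km r5 i by (simp add: nxt_def)
    have "i mod 5 = 4" using b k5 by presburger
    then show ?thesis using b n c4 by (simp add: sg_def k_def)
  next
    case c
    then have n: "nxt m i = i + 1" by (simp add: nxt_def)
    have "sg r m i = i - k" "sg r m (i+1) = i - k + 1" using c by (auto simp: sg_def k_def)
    moreover have "(i - k) + 2 \<le> r m" using c km by linarith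
    ultimately show ?thesis using n step by simp
  next
    case d
    then have n: "nxt m i = 0" by (simp add: nxt_def)
    have "sg r m i = r m - 1" using d km r5 by (auto simp: sg_def k_def)
    then show ?thesis using n s0 bk by simp
  qed
qed

lemma rr_facts: assumes "m \<ge> 5" "m \<noteq> 6" "m \<noteq> 8"
  shows "5 \<le> rr m \<and> rr m \<le> m \<and> (m - rr m) mod 5 = 0 \<and> rr m \<le> 13 \<and> Rr (rr m - 1) 0"
proof -
  have "m mod 5 = 0 \<or> m mod 5 = 1 \<or> m mod 5 = 2 \<or> m mod 5 = 3 \<or> m mod 5 = 4" by auto
  moreover have "m mod 5 = 1 \<Longrightarrow> m \<ge> 11" using assms by presburger
  moreover have "m mod 5 = 3 \<Longrightarrow> m \<ge> 13" using assms by presburger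
  moreover have "m mod 5 = 2 \<Longrightarrow> m \<ge> 7" using assms by presburger
  moreover have "m mod 5 = 4 \<Longrightarrow> m \<ge> 9" using assms by presburger
  moreover have "(m - r) mod 5 = 0" if "r \<le> m" "r mod 5 = m mod 5" for r
    using mod_eq_dvd_iff_nat[of r m 5] that by (simp add: dvd_eq_mod_eq_0)
  ultimately show ?thesis using assms unfolding rr_def Rr_def by auto
qed

lemma rc_facts: assumes "n \<ge> 5" "n \<noteq> 7"
  shows "5 \<le> rc n \<and> rc n \<le> n \<and> (n - rc n) mod 5 = 0 \<and> rc n \<le> 12 \<and> Cr (rc n - 1) 0"
proof -
  have "n mod 5 = 0 \<or> n mod 5 = 1 \<or> n mod 5 = 2 \<or> n mod 5 = 3 \<or> n mod 5 = 4" by auto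
  moreover have "n mod 5 = 1 \<Longrightarrow> n \<ge> 6" using assms by presburger
  moreover have "n mod 5 = 3 \<Longrightarrow> n \<ge> 8" using assms by presburger
  moreover have "n mod 5 = 2 \<Longrightarrow> n \<ge> 12" using assms by presburger
  moreover have "n mod 5 = 4 \<Longrightarrow> n \<ge> 9" using assms by presburger
  moreover have "(n - r) mod 5 = 0" if "r \<le> n" "r mod 5 = n mod 5" for r
    using mod_eq_dvd_iff_nat[of r n 5] that by (simp add: dvd_eq_mod_eq_0)
  ultimately show ?thesis using assms unfolding rc_def Cr_def by auto
qed

lemma sg_lt: "i < m \<Longrightarrow> r m \<le> m \<Longrightarrow> r m \<le> B \<Longrightarrow> 5 \<le> B \<Longrightarrow> sg r m i < B"
  by (auto simp: sg_def)


theorem lemma3: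
  fixes m n :: nat
  assumes "m \<ge> 5" and "n \<ge> 5" and "m \<noteq> 6" and "m \<noteq> 8" and "n \<noteq> 7"
  shows "incidence_chromatic_number (cart_prod (cycle_graph m) (cycle_graph n)) \<le> 6"
proof -
  have R: "5 \<le> rr m \<and> rr m \<le> m \<and> (m - rr m) mod 5 = 0 \<and> rr m \<le> 13 \<and> Rr (rr m - 1) 0"
    using rr_facts assms by blast
  have C: "5 \<le> rc n \<and> rc n \<le> n \<and> (n - rc n) mod 5 = 0 \<and> rc n \<le> 12 \<and> Cr (rc n - 1) 0"
    using rc_facts assms by blast
  interpret tor_setup m n "sg rr m" "sg rc n"
  proof
    show "3 \<le> m" "3 \<le> n" using assms by auto
  next
    fix i assume "i < m" then show "sg rr m i < 13" using sg_lt[of i m rr 13] R by auto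
  next
    fix j assume "j < n" then show "sg rc n j < 12" using sg_lt[of j n rc 12] C by auto
  next
    fix i assume i: "i < m"
    show "Rr (sg rr m i) (sg rr m (nxt m i))"
    proof (rule walk[where P = Rr])
      show "\<And>a. a + 2 \<le> rr m \<Longrightarrow> Rr a (a+1)" using R by (auto simp: Rr_def)
      show "\<And>a. a < 4 \<Longrightarrow> Rr a (a+1)" by (auto simp: Rr_def)
      show "Rr 4 0" by (simp add: Rr_def)
    qed (use R i in auto)
  next
    fix j assume j: "j < n"
    show "Cr (sg rc n j) (sg rc n (nxt n j))"
    proof (rule walk[where P = Cr])
      show "\<And>a. a + 2 \<le> rc n \<Longrightarrow> Cr a (a+1)" using C by (auto simp: Cr_def)
      show "\<And>a. a < 4 \<Longrightarrow> Cr a (a+1)" by (auto simp: Cr_def)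
      show "Cr 4 0" by (simp add: Cr_def)
    qed (use C j in auto)
  qed
  show ?thesis
    unfolding incidence_chromatic_number_def
    by (rule Least_le) (rule exI, rule coloring)
qed

end
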